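(* Let $N\in\mathbb{N}$, let $x_1,\dots,x_N\in\mathbb{R}^3$ be distinct points and let $\alpha_1,\dots,\alpha_N\in\mathbb{R}$ satisfy (A1) $\alpha_n>0$ for all $n$, and (A2) $\sum_{m\neq n}\frac{1}{(4\pi\alpha_m)^2|x_m-x_n|^2}<1$. Then for every $z\in\mathbb{C}\setminus[0,+\infty)$ the matrix $\Gamma_N^z$ is invertible, and $\Gamma_N^z$ extends continuously to two (distinct) invertible matrices as $z$ approaches the cut $[0,+\infty)$ from above and from below. Furthermore, $(\Gamma_N^z)^{-1}$ and its boundary extensions admit the absolutely convergent Neumann series representation $$(\Gamma_N^z)^{-1}=\sum_{j=0}^\infty\big[(V_N^z)^{-1}P_N^z\big]^j(V_N^z)^{-1},$$ where $[V_N^z]_{mn}:=(\alpha_n-\frac{i\sqrt z}{4\pi})\delta_{mn}$ and $[P_N^z]_{mn}:=\frac{e^{i\sqrt z|x_m-x_n|}}{4\pi|x_m-x_n|}(1-\delta_{mn})$ (with the corresponding boundary values on the cut).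
   Context: For $z\in\mathbb{C}\setminus[0,+\infty)$, $\sqrt{z}$ denotes the branch with $\Im\sqrt z>0$ (on the cut $z=v^2$, $v>0$, the boundary values are $\sqrt z\to v$ from above and $\sqrt z\to-v$ from below). $\Gamma_N^z$ is the $N\times N$ matrix with entries $[\Gamma_N^z]_{mn}=(\alpha_n-\frac{i\sqrt z}{4\pi})\delta_{mn}-\frac{e^{i\sqrt z|x_m-x_n|}}{4\pi|x_m-x_n|}(1-\delta_{mn})$, where the off-diagonal term is understood to vanish for $m=n$. *)

theory Defs
  imports "HOL-Analysis.Analysis"
begin

text \<open>Branch of the square root with positive imaginary part on the complement
of the cut [0,+inf): sqrt z = i * csqrt(-z).\<close>
definition sqrtIm :: "complex \<Rightarrow> complex" where
  "sqrtIm z = \<i> * csqrt (- z)"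

text \<open>The matrices as functions of k (= sqrt z, or its boundary value +-v on the cut).\<close>
definition VK :: "('n::finite \<Rightarrow> real) \<Rightarrow> complex \<Rightarrow> complex^'n^'n" where
  "VK \<alpha> k = (\<chi> m n. if m = n then of_real (\<alpha> n) - \<i> * k / (4 * of_real pi) else 0)"

definition PK :: "('n::finite \<Rightarrow> real^3) \<Rightarrow> complex \<Rightarrow> complex^'n^'n" where
  "PK x k = (\<chi> m n. if m = n then 0
     else exp (\<i> * k * of_real (dist (x m) (x n))) / (4 * of_real pi * of_real (dist (x m) (x n))))"

definition GammaK :: "('n::finite \<Rightarrow> real) \<Rightarrow> ('n \<Rightarrow> real^3) \<Rightarrow> complex \<Rightarrow> complex^'n^'n" where
  "GammaK \<alpha> x k = VK \<alpha> k - PK x k"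

definition Gamma :: "('n::finite \<Rightarrow> real) \<Rightarrow> ('n \<Rightarrow> real^3) \<Rightarrow> complex \<Rightarrow> complex^'n^'n" where
  "Gamma \<alpha> x z = GammaK \<alpha> x (sqrtIm z)"

definition V :: "('n::finite \<Rightarrow> real) \<Rightarrow> complex \<Rightarrow> complex^'n^'n" where
  "V \<alpha> z = VK \<alpha> (sqrtIm z)"

definition P :: "('n::finite \<Rightarrow> real^3) \<Rightarrow> complex \<Rightarrow> complex^'n^'n" where
  "P x z = PK x (sqrtIm z)"

text \<open>Matrix powers (note: * on vec is componentwise, so we use **).\<close>
primrec mpow :: "'a::comm_ring_1^'n::finite^'n \<Rightarrow> nat \<Rightarrow> 'a^'n^'n" where
  "mpow A 0 = mat 1"
| "mpow A (Suc j) = A ** mpow A j"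

definition neumann_term :: "complex^'n::finite^'n \<Rightarrow> complex^'n^'n \<Rightarrow> nat \<Rightarrow> complex^'n^'n" where
  "neumann_term Vm Pm j = mpow (matrix_inv Vm ** Pm) j ** matrix_inv Vm"

definition neumann_rep :: "complex^'n::finite^'n \<Rightarrow> complex^'n^'n \<Rightarrow> complex^'n^'n \<Rightarrow> bool" where
  "neumann_rep G Vm Pm \<longleftrightarrow> invertible G \<and> summable (\<lambda>j. norm (neumann_term Vm Pm j))
     \<and> matrix_inv G = (\<Sum>j. neumann_term Vm Pm j)"

end

theory Submission
  imports Defs
begin


lemma norm_sq_mat: "(norm (M::complex^'n::finite^'m::finite))\<^sup>2 = (\<Sum>i\<in>UNIV. \<Sum>j\<in>UNIV. (norm (M$i$j))\<^sup>2)"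
  by (simp add: norm_vec_def L2_set_def sum_nonneg)

lemma norm_mult_mat: "norm ((A::complex^'n::finite^'n) ** B) \<le> norm A * norm B"
proof -
  have e: "(norm ((A ** B)$i$j))\<^sup>2 \<le> (\<Sum>k\<in>UNIV. (norm (A$i$k))\<^sup>2) * (\<Sum>k\<in>UNIV. (norm (B$k$j))\<^sup>2)" for i j
  proof -
    have "norm ((A ** B)$i$j) \<le> (\<Sum>k\<in>UNIV. \<bar>norm (A$i$k)\<bar> * \<bar>norm (B$k$j)\<bar>)"
      unfolding matrix_matrix_mult_def by (simp add: norm_mult[symmetric]) (rule norm_sum)
    also have "\<dots> \<le> L2_set (\<lambda>k. norm (A$i$k)) UNIV * L2_set (\<lambda>k. norm (B$k$j)) UNIV"
      by (rule L2_set_mult_ineq)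
    finally have "(norm ((A ** B)$i$j))\<^sup>2 \<le> (L2_set (\<lambda>k. norm (A$i$k)) UNIV * L2_set (\<lambda>k. norm (B$k$j)) UNIV)\<^sup>2"
      by (simp add: power_mono)
    also have "\<dots> = (\<Sum>k\<in>UNIV. (norm (A$i$k))\<^sup>2) * (\<Sum>k\<in>UNIV. (norm (B$k$j))\<^sup>2)"
      by (simp add: power_mult_distrib L2_set_def sum_nonneg)
    finally show ?thesis .
  qed
  have "(norm (A ** B))\<^sup>2 \<le> (\<Sum>i\<in>UNIV. \<Sum>j\<in>UNIV. (\<Sum>k\<in>UNIV. (norm (A$i$k))\<^sup>2) * (\<Sum>k\<in>UNIV. (norm (B$k$j))\<^sup>2))"
    unfolding norm_sq_mat by (intro sum_mono e)
  also have "\<dots> = (norm A)\<^sup>2 * (norm B)\<^sup>2"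
    unfolding norm_sq_mat sum_product[symmetric] using sum.swap[of "\<lambda>j k. (norm (B$k$j))\<^sup>2" UNIV UNIV] by simp
  finally have "(norm (A ** B))\<^sup>2 \<le> (norm A * norm B)\<^sup>2" by (simp add: power_mult_distrib)
  thus ?thesis by (rule power2_le_imp_le) simp
qed


lemma inv_eq:
  fixes G S :: "complex^'n::finite^'n"
  assumes "G ** S = mat 1"
  shows "invertible G \<and> matrix_inv G = S"
proof -
  have SG: "S ** G = mat 1" using assms matrix_left_right_inverse by blast
  hence inv: "invertible G" using assms unfolding invertible_def by blast
  let ?M = "matrix_inv G"
  have "G ** ?M = mat 1 \<and> ?M ** G = mat 1"
    unfolding matrix_inv_def by (rule someI_ex) (use inv in \<open>auto simp: invertible_def\<close>)
  hence "?M = ?M ** (G ** S)" using assms by simp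
  also have "\<dots> = S" using \<open>G ** ?M = mat 1 \<and> ?M ** G = mat 1\<close> by (simp add: matrix_mul_assoc)
  finally show ?thesis using inv by simp
qed

lemma bl_mult: "bounded_linear (\<lambda>M. (G::complex^'n::finite^'n) ** M)"
proof (rule bounded_linear_intro[where K="norm G"])
  show "G ** (x + y) = G ** x + G ** y" for x y by (rule matrix_add_ldistrib)
  show "G ** (r *\<^sub>R x) = r *\<^sub>R (G ** x)" for r x
    by (simp add: vec_eq_iff matrix_matrix_mult_def scaleR_sum_right)
  show "norm (G ** x) \<le> norm x * norm G" for x using norm_mult_mat[of G x] by (simp add: mult.commute)
qed

lemma mpow_bound: "norm (mpow (A::complex^'n::finite^'n) j ** M) \<le> norm A ^ j * norm M"
proof (induction j)
  case 0 then show ?case by simp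
next
  case (Suc j)
  have "norm (mpow A (Suc j) ** M) = norm (A ** (mpow A j ** M))" by (simp add: matrix_mul_assoc)
  also have "\<dots> \<le> norm A * norm (mpow A j ** M)" by (rule norm_mult_mat)
  also have "\<dots> \<le> norm A * (norm A ^ j * norm M)" by (rule mult_left_mono[OF Suc.IH]) simp
  finally show ?case by (simp add: mult.assoc)
qed

lemma neumann_generic:
  fixes W Pm D :: "complex^'n::finite^'n"
  assumes WD: "W ** D = mat 1" and DW: "D ** W = mat 1" and nA: "norm (D ** Pm) < 1"
  shows "neumann_rep (W - Pm) W Pm"
proof -
  have mi: "matrix_inv W = D" using inv_eq[OF WD] by simp
  define A where "A = D ** Pm"
  define T where "T j = mpow A j ** D" for j
  have nt: "neumann_term W Pm j = T j" for j unfolding neumann_term_def mi T_def A_def ..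
  have bT: "norm (T j) \<le> norm D * norm A ^ j" for j
    using mpow_bound[of A j D] unfolding T_def by (simp add: mult.commute)
  have sn: "summable (\<lambda>j. norm (T j))"
  proof (rule summable_comparison_test')
    show "summable (\<lambda>j. norm D * norm A ^ j)"
      using nA by (auto simp: A_def intro!: summable_mult summable_geometric)
    show "norm (norm (T j)) \<le> norm D * norm A ^ j" for j using bT[of j] by simp
  qed
  have sT: "summable T" by (rule summable_norm_cancel[OF sn])
  define f where "f j = W ** T j" for j
  have PWA: "Pm = W ** A" unfolding A_def by (simp add: matrix_mul_assoc WD)
  have step: "(W - Pm) ** T j = f j - f (Suc j)" for j
  proof -
    have "(W - Pm) ** T j = W ** T j - Pm ** T j"
      by (simp add: vec_eq_iff matrix_matrix_mult_def sum_subtractf algebra_simps)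
    also have "Pm ** T j = f (Suc j)" unfolding PWA f_def T_def by (simp add: matrix_mul_assoc)
    finally show ?thesis unfolding f_def by simp
  qed
  have f0: "f \<longlonglongrightarrow> 0"
  proof (rule Lim_null_comparison)
    show "\<forall>\<^sub>F j in sequentially. norm (f j) \<le> norm W * (norm D * norm A ^ j)"
    proof (intro always_eventually allI)
      fix j
      have "norm (f j) \<le> norm W * norm (T j)" unfolding f_def by (rule norm_mult_mat)
      also have "\<dots> \<le> norm W * (norm D * norm A ^ j)" by (rule mult_left_mono[OF bT]) simp
      finally show "norm (f j) \<le> norm W * (norm D * norm A ^ j)" .
    qed
    show "(\<lambda>j. norm W * (norm D * norm A ^ j)) \<longlonglongrightarrow> 0"
      using nA by (auto simp: A_def intro!: tendsto_mult_right_zero LIMSEQ_power_zero)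
  qed
  have "(\<lambda>j. f j - f (Suc j)) sums (f 0 - 0)" by (rule telescope_sums'[OF f0])
  moreover have "f 0 = mat 1" by (simp add: f_def T_def WD)
  ultimately have s1: "(\<lambda>j. (W - Pm) ** T j) sums mat 1" by (simp add: step)
  have s2: "(\<lambda>j. (W - Pm) ** T j) sums ((W - Pm) ** suminf T)"
    by (rule bounded_linear.sums[OF bl_mult]) (rule summable_sums[OF sT])
  have "(W - Pm) ** suminf T = mat 1" using sums_unique2[OF s2 s1] .
  from inv_eq[OF this] show ?thesis unfolding neumann_rep_def nt using sn by simp
qed


lemma sum_delta_l: "(\<Sum>l\<in>UNIV. (if (i::'n::finite) = l then a l else 0) * f l) = (a i * f i :: 'a::comm_ring_1)"
proof -
  have "(\<Sum>l\<in>UNIV. (if i = l then a l else 0) * f l) = (\<Sum>l\<in>UNIV. if i = l then a l * f l else 0)"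
    by (rule sum.cong) auto
  also have "\<dots> = a i * f i" by (simp add: sum.delta')
  finally show ?thesis .
qed

lemma diag_left: "(((\<chi> m n. if m = n then a n else 0) :: 'a::comm_ring_1^'n::finite^'n) ** M) $ i $ j = a i * M$i$j"
  by (simp add: matrix_matrix_mult_def sum_delta_l)

lemma diag_mat1: "(\<And>n. a n * b n = 1) \<Longrightarrow>
   ((\<chi> m n. if m = n then a n else 0) :: 'a::comm_ring_1^'n::finite^'n) ** (\<chi> m n. if m = n then b n else 0) = mat 1"
  by (simp add: vec_eq_iff diag_left mat_def)

lemma VK_diag: "VK \<alpha> k = (\<chi> m n. if m = n then of_real (\<alpha> n) - \<i> * k / (4 * of_real pi) else 0)"
  by (simp add: VK_def)

lemma VK_inv:
  fixes \<alpha> :: "'n::finite \<Rightarrow> real"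
  assumes A1: "\<And>n. \<alpha> n > 0" and k: "Im k \<ge> 0"
  shows "VK \<alpha> k ** (\<chi> m n. if m = n then 1 / (of_real (\<alpha> n) - \<i> * k / (4 * of_real pi)) else 0) = mat 1"
    "(\<chi> m n. if m = n then 1 / (of_real (\<alpha> n) - \<i> * k / (4 * of_real pi)) else 0) ** VK \<alpha> k = mat 1"
    "\<And>n. Re (of_real (\<alpha> n) - \<i> * k / (4 * of_real pi)) \<ge> \<alpha> n"
proof -
  show Rc: "Re (of_real (\<alpha> n) - \<i> * k / (4 * of_real pi)) \<ge> \<alpha> n" for n
    using k by (simp add: Re_divide)
  have cnz: "of_real (\<alpha> n) - \<i> * k / (4 * of_real pi) \<noteq> 0" for n
  proof
    assume "of_real (\<alpha> n) - \<i> * k / (4 * of_real pi) = 0"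
    hence "Re (of_real (\<alpha> n) - \<i> * k / (4 * of_real pi)) = 0" by simp
    with Rc[of n] A1[of n] show False by linarith
  qed
  show "VK \<alpha> k ** (\<chi> m n. if m = n then 1 / (of_real (\<alpha> n) - \<i> * k / (4 * of_real pi)) else 0) = mat 1"
    unfolding VK_diag by (rule diag_mat1) (metis cnz divide_self_if times_divide_eq_right mult_1_right times_divide_eq_left mult_1_left)
  show "(\<chi> m n. if m = n then 1 / (of_real (\<alpha> n) - \<i> * k / (4 * of_real pi)) else 0) ** VK \<alpha> k = mat 1"
    unfolding VK_diag by (rule diag_mat1) (metis cnz divide_self_if times_divide_eq_right mult_1_right times_divide_eq_left mult_1_left)
qed


lemma entry_bound:
  fixes x :: "'n::finite \<Rightarrow> real^3" and \<alpha> :: "'n \<Rightarrow> real"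
  assumes distinct: "inj x" and A1: "\<And>n. \<alpha> n > 0" and k: "Im k \<ge> 0" and mn: "m \<noteq> n"
  shows "(norm (1 / (of_real (\<alpha> m) - \<i> * k / (4 * of_real pi)) * PK x k $ m $ n))\<^sup>2
     \<le> 1 / ((4 * pi * \<alpha> m)\<^sup>2 * (dist (x m) (x n))\<^sup>2)"
proof -
  define d where "d = dist (x m) (x n)"
  define c where "c = of_real (\<alpha> m) - \<i> * k / (4 * of_real pi)"
  have d: "d > 0" using distinct mn unfolding d_def inj_def by auto
  have Rc: "Re c \<ge> \<alpha> m" using k by (simp add: c_def Re_divide)
  have nc: "norm c \<ge> \<alpha> m" using Rc complex_Re_le_cmod[of c] by linarith
  have am: "\<alpha> m > 0" by (rule A1)
  have ne: "norm (exp (\<i> * k * of_real d)) \<le> 1"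
    using k d by (simp add: norm_exp_eq_Re mult_nonneg_nonneg)
  have "norm (1 / c * PK x k $ m $ n) = norm (exp (\<i> * k * of_real d)) / (norm c * (4 * pi * d))"
    using mn d by (simp add: PK_def d_def[symmetric] norm_mult norm_divide)
  also have "\<dots> \<le> 1 / (\<alpha> m * (4 * pi * d))"
  proof (rule frac_le)
    show "0 < \<alpha> m * (4 * pi * d)" using am d by simp
    show "\<alpha> m * (4 * pi * d) \<le> norm c * (4 * pi * d)" using nc d by (intro mult_right_mono) auto
  qed (use ne in auto)
  finally have "(norm (1 / c * PK x k $ m $ n))\<^sup>2 \<le> (1 / (\<alpha> m * (4 * pi * d)))\<^sup>2"
    by (intro power_mono) auto
  also have "\<dots> = 1 / ((4 * pi * \<alpha> m)\<^sup>2 * d\<^sup>2)" by (simp add: power2_eq_square field_simps)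
  finally show ?thesis unfolding c_def d_def .
qed

lemma normA:
  fixes x :: "'n::finite \<Rightarrow> real^3" and \<alpha> :: "'n \<Rightarrow> real"
  assumes distinct: "inj x"
    and A1: "\<And>n. \<alpha> n > 0"
    and A2: "(\<Sum>(m, n) \<in> {(m, n). m \<noteq> n}.
               1 / ((4 * pi * \<alpha> m)\<^sup>2 * (dist (x m) (x n))\<^sup>2)) < 1"
    and k: "Im k \<ge> 0"
  shows "norm ((\<chi> m n. if m = n then 1 / (of_real (\<alpha> n) - \<i> * k / (4 * of_real pi)) else 0) ** PK x k) < 1"
proof -
  define g where "g = (\<lambda>(m::'n, n). if m = n then 0 else 1 / ((4 * pi * \<alpha> m)\<^sup>2 * (dist (x m) (x n))\<^sup>2))"
  have "(norm ((\<chi> m n. if m = n then 1 / (of_real (\<alpha> n) - \<i> * k / (4 * of_real pi)) else 0) ** PK x k))\<^sup>2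
     = (\<Sum>m\<in>UNIV. \<Sum>n\<in>UNIV. (norm (1 / (of_real (\<alpha> m) - \<i> * k / (4 * of_real pi)) * PK x k $ m $ n))\<^sup>2)"
    unfolding norm_sq_mat diag_left ..
  also have "\<dots> \<le> (\<Sum>m\<in>UNIV. \<Sum>n\<in>UNIV. g (m, n))"
  proof (intro sum_mono)
    fix m n :: 'n
    show "(norm (1 / (of_real (\<alpha> m) - \<i> * k / (4 * of_real pi)) * PK x k $ m $ n))\<^sup>2 \<le> g (m, n)"
    proof (cases "m = n")
      case True then show ?thesis by (simp add: g_def PK_def)
    next
      case False then show ?thesis using entry_bound[OF distinct A1 k False] by (simp add: g_def)
    qed
  qed
  also have "\<dots> = (\<Sum>p\<in>UNIV. g p)"
    by (simp add: sum.cartesian_product)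
  also have "\<dots> = (\<Sum>(m, n) \<in> {(m, n). m \<noteq> n}. 1 / ((4 * pi * \<alpha> m)\<^sup>2 * (dist (x m) (x n))\<^sup>2))"
    by (rule sum.mono_neutral_cong_right) (auto simp: g_def)
  also have "\<dots> < 1" by (rule A2)
  finally have "(norm ((\<chi> m n. if m = n then 1 / (of_real (\<alpha> n) - \<i> * k / (4 * of_real pi)) else 0) ** PK x k))\<^sup>2 < 1\<^sup>2"
    by simp
  thus ?thesis by (rule power_less_imp_less_base) simp
qed


lemma nrep:
  fixes x :: "'n::finite \<Rightarrow> real^3" and \<alpha> :: "'n \<Rightarrow> real"
  assumes distinct: "inj x"
    and A1: "\<And>n. \<alpha> n > 0"
    and A2: "(\<Sum>(m, n) \<in> {(m, n). m \<noteq> n}.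
               1 / ((4 * pi * \<alpha> m)\<^sup>2 * (dist (x m) (x n))\<^sup>2)) < 1"
    and k: "Im k \<ge> 0"
  shows "neumann_rep (GammaK \<alpha> x k) (VK \<alpha> k) (PK x k)"
  unfolding GammaK_def
  by (rule neumann_generic[OF VK_inv(1)[OF A1 k] VK_inv(2)[OF A1 k] normA[OF distinct A1 A2 k]])

lemma Im_sqrtIm: "Im (sqrtIm z) \<ge> 0"
proof -
  have "Im (sqrtIm z) = Re (csqrt (-z))" by (simp add: sqrtIm_def del: csqrt.simps)
  thus ?thesis using Re_csqrt[of "-z"] by simp
qed

lemma sqrtIm_up: "Im z > 0 \<Longrightarrow> sqrtIm z = csqrt z"
  using csqrt_minus[of "-z"] by (simp add: sqrtIm_def)

lemma sqrtIm_down: "Im z < 0 \<Longrightarrow> sqrtIm z = - csqrt z"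
  using csqrt_minus[of "z"] by (simp add: sqrtIm_def)

lemma csqrt_lim: "v \<ge> 0 \<Longrightarrow> (csqrt \<longlongrightarrow> of_real v) (at (of_real (v\<^sup>2)))"
proof (cases "v = 0")
  case True
  have "((\<lambda>z. norm (csqrt z)) \<longlongrightarrow> 0) (at (0::complex))"
  proof -
    have "((\<lambda>z. sqrt (norm z)) \<longlongrightarrow> sqrt (norm (0::complex))) (at (0::complex))"
      by (intro tendsto_intros)
    thus ?thesis by simp
  qed
  hence "(csqrt \<longlongrightarrow> 0) (at (0::complex))" by (rule tendsto_norm_zero_cancel)
  thus ?thesis using True by simp
next
  case False
  assume v: "v \<ge> 0"
  hence vp: "v > 0" using False by simp
  have "(of_real (v\<^sup>2) :: complex) \<notin> \<real>\<^sub>\<le>\<^sub>0" 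
  proof -
    have "Re (of_real (v\<^sup>2) :: complex) > 0" using vp by simp
    thus ?thesis by (metis complex_nonpos_Reals_iff not_le)
  qed
  hence "isCont csqrt (of_real (v\<^sup>2))" by (rule continuous_at_csqrt)
  moreover have "csqrt (of_real (v\<^sup>2)) = of_real v" using v by simp
  ultimately show ?thesis by (metis isCont_def)
qed

lemma GammaK_cont: assumes inj: "inj x" shows "isCont (GammaK \<alpha> x) k"
proof -
  have e: "GammaK \<alpha> x = (\<lambda>k. \<chi> m n. (if m = n then of_real (\<alpha> n) - \<i> * k / (4 * of_real pi) else 0)
     - (if m = n then 0 else exp (\<i> * k * of_real (dist (x m) (x n))) / (4 * of_real pi * of_real (dist (x m) (x n)))))"
    by (simp add: fun_eq_iff vec_eq_iff GammaK_def VK_def PK_def)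
  have "continuous_on UNIV (GammaK \<alpha> x)"
    unfolding e apply (intro continuous_on_vec_lambda)
    subgoal for m n using inj by (cases "m = n") (auto intro!: continuous_intros simp: inj_def)
    done
  thus ?thesis by (simp add: continuous_on_eq_continuous_at)
qed


theorem lemma3p1:
  fixes x :: "'n::finite \<Rightarrow> real^3" and \<alpha> :: "'n \<Rightarrow> real"
  assumes distinct: "inj x"
    and A1: "\<And>n. \<alpha> n > 0"
    and A2: "(\<Sum>(m, n) \<in> {(m, n). m \<noteq> n}.
               1 / ((4 * pi * \<alpha> m)\<^sup>2 * (dist (x m) (x n))\<^sup>2)) < 1"
  shows "(\<forall>z. z \<notin> {of_real t | t. t \<ge> 0} \<longrightarrow>
            neumann_rep (Gamma \<alpha> x z) (V \<alpha> z) (P x z))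
    \<and> (\<forall>v::real. v \<ge> 0 \<longrightarrow>
          ((Gamma \<alpha> x \<longlongrightarrow> GammaK \<alpha> x (of_real v)) (at (of_real (v\<^sup>2)) within {z. Im z > 0}))
        \<and> ((Gamma \<alpha> x \<longlongrightarrow> GammaK \<alpha> x (- of_real v)) (at (of_real (v\<^sup>2)) within {z. Im z < 0}))
        \<and> neumann_rep (GammaK \<alpha> x (of_real v)) (VK \<alpha> (of_real v)) (PK x (of_real v))
        \<and> neumann_rep (GammaK \<alpha> x (- of_real v)) (VK \<alpha> (- of_real v)) (PK x (- of_real v)))
    \<and> (\<forall>v::real. v > 0 \<longrightarrow> GammaK \<alpha> x (of_real v) \<noteq> GammaK \<alpha> x (- of_real v))"
  proof -
  have off: "\<forall>z. z \<notin> {of_real t | t. t \<ge> 0} \<longrightarrow> neumann_rep (Gamma \<alpha> x z) (V \<alpha> z) (P x z)"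
    unfolding Gamma_def V_def P_def using nrep[OF distinct A1 A2 Im_sqrtIm] by blast
  have bd: "((Gamma \<alpha> x \<longlongrightarrow> GammaK \<alpha> x (of_real v)) (at (of_real (v\<^sup>2)) within {z. Im z > 0}))
        \<and> ((Gamma \<alpha> x \<longlongrightarrow> GammaK \<alpha> x (- of_real v)) (at (of_real (v\<^sup>2)) within {z. Im z < 0}))
        \<and> neumann_rep (GammaK \<alpha> x (of_real v)) (VK \<alpha> (of_real v)) (PK x (of_real v))
        \<and> neumann_rep (GammaK \<alpha> x (- of_real v)) (VK \<alpha> (- of_real v)) (PK x (- of_real v))"
    if v: "v \<ge> 0" for v :: real
  proof (intro conjI)
    show "neumann_rep (GammaK \<alpha> x (of_real v)) (VK \<alpha> (of_real v)) (PK x (of_real v))"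
      by (rule nrep[OF distinct A1 A2]) simp
    show "neumann_rep (GammaK \<alpha> x (- of_real v)) (VK \<alpha> (- of_real v)) (PK x (- of_real v))"
      by (rule nrep[OF distinct A1 A2]) simp
    have cl: "(csqrt \<longlongrightarrow> of_real v) (at (of_real (v\<^sup>2)) within S)" for S
      by (rule tendsto_mono[OF at_le[OF subset_UNIV]]) (rule csqrt_lim[OF v])
    have up: "((\<lambda>z. GammaK \<alpha> x (csqrt z)) \<longlongrightarrow> GammaK \<alpha> x (of_real v)) (at (of_real (v\<^sup>2)) within {z. Im z > 0})"
      by (rule isCont_tendsto_compose[OF GammaK_cont[OF distinct] cl])
    have dn: "((\<lambda>z. GammaK \<alpha> x (- csqrt z)) \<longlongrightarrow> GammaK \<alpha> x (- of_real v)) (at (of_real (v\<^sup>2)) within {z. Im z < 0})"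
      by (rule isCont_tendsto_compose[OF GammaK_cont[OF distinct] tendsto_minus[OF cl]])
    show "(Gamma \<alpha> x \<longlongrightarrow> GammaK \<alpha> x (of_real v)) (at (of_real (v\<^sup>2)) within {z. Im z > 0})"
    proof (rule tendsto_cong[THEN iffD1, OF _ up])
      show "\<forall>\<^sub>F z in at (of_real (v\<^sup>2)) within {z. Im z > 0}. GammaK \<alpha> x (csqrt z) = Gamma \<alpha> x z"
        by (auto simp: eventually_at_filter Gamma_def sqrtIm_up intro!: always_eventually)
    qed
    show "(Gamma \<alpha> x \<longlongrightarrow> GammaK \<alpha> x (- of_real v)) (at (of_real (v\<^sup>2)) within {z. Im z < 0})"
    proof (rule tendsto_cong[THEN iffD1, OF _ dn])
      show "\<forall>\<^sub>F z in at (of_real (v\<^sup>2)) within {z. Im z < 0}. GammaK \<alpha> x (- csqrt z) = Gamma \<alpha> x z"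
        by (auto simp: eventually_at_filter Gamma_def sqrtIm_down intro!: always_eventually)
    qed
  qed
  have ne: "GammaK \<alpha> x (of_real v) \<noteq> GammaK \<alpha> x (- of_real v)" if v: "v > 0" for v :: real
  proof
    assume "GammaK \<alpha> x (of_real v) = GammaK \<alpha> x (- of_real v)"
    hence "GammaK \<alpha> x (of_real v) $ undefined $ undefined = GammaK \<alpha> x (- of_real v) $ undefined $ undefined"
      by simp
    hence "Im (GammaK \<alpha> x (of_real v) $ undefined $ undefined) = Im (GammaK \<alpha> x (- of_real v) $ undefined $ undefined)"
      by simp
    thus False using v by (simp add: GammaK_def VK_def PK_def Im_divide)
  qed
  show ?thesis using off bd ne by blast
qed

end
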